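(* Let $\sigma=\langle\mathcal V,\mathcal C,S,B\rangle$ be an approval-based multi-winner election, and fix any run of ODH on $\sigma$, with arbitrary choices of the functions $F$ and arbitrary tie-breaking. For $i=0,\dots,S-1$, let $\mathcal C_e^i$ be the set of the first $i$ candidates chosen in this run, with $\mathcal C_e^0=\emptyset$. Then for every $c\in\mathcal C\setminus\mathcal C_e^i$ and every $F\in\mathfrak F^{\mathrm{opt}}_{\sigma,\mathcal C_e^i\cup\{c\}}$, $$\mathrm{Supp}_F(c)=\mathrm{maxMin}(\sigma,\mathcal C_e^i\cup\{c\}).$$ In particular, the value $s_c$ computed by ODH at each iteration does not depend on the choice of $F$.
   Context: An approval-based multi-winner election is a tuple $\sigma=\langle \mathcal V,\mathcal C,S,B\rangle$, where $\mathcal V$ is a finite set of agents, $\mathcal C$ is a finite set of candidates, $1\le S\le|\mathcal C|$ is an integer, and $B:2^{\mathcal C}\to\mathbb N$ gives, for each $\mathcal A\subseteq\mathcal C$, the number $B(\mathcal A)$ of agents whose ballot is exactly $\mathcal A$ (with $\sum_{\mathcal A}B(\mathcal A)\le|\mathcal V|$). For a non-empty $\mathcal A\subseteq\mathcal C$, the family $\mathfrak F_{\sigma,\mathcal A}$ is the set of all $F:2^{\mathcal C}\times\mathcal A\to\mathbb R$ such that: - $F(y,c)\ge0$ for all $y$ and $c$; - $F(y,c)=0$ if $c\notin y$; - $\sum_{c\in\mathcal A\cap y}F(y,c)=B(y)$ whenever $y\cap\mathcal A\neq\emptyset$. We write $\mathrm{Supp}_F(c)=\sum_yF(y,c)$ and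 $\mathrm{maxMin}(\sigma,\mathcal A)=\sup_{F\in\mathfrak F_{\sigma,\mathcal A}}\min_{c\in\mathcal A}\mathrm{Supp}_F(c)$. We also write $\mathfrak F^{\mathrm{opt}}_{\sigma,\mathcal A}=\{F\in\mathfrak F_{\sigma,\mathcal A}:\mathrm{Supp}_F(c)\ge\mathrm{maxMin}(\sigma,\mathcal A)\ \forall c\in\mathcal A\}$, which is non-empty. The Open D'Hondt (ODH) rule proceeds as follows. Start with $\mathcal C_e=\emptyset$ and repeat $S$ times: - for each $c\in\mathcal C\setminus\mathcal C_e$, choose any $F\in\mathfrak F^{\mathrm{opt}}_{\sigma,\mathcal C_e\cup\{c\}}$ and set $s_c=\mathrm{Supp}_F(c)$; - then add to $\mathcal C_e$ some $w\in\mathcal C\setminus\mathcal C_e$ with $s_w=\max_{c\in\mathcal C\setminus\mathcal C_e}s_c$ (ties broken arbitrarily). Finally, output $\mathcal C_e$. *)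

theory Defs
  imports Complex_Main
begin

text \<open>Approval-based multi-winner election (V, C, S, B). Ballots are subsets of C;
  B y is the number of agents whose ballot is exactly y. B is required to vanish
  outside 2^C.\<close>
definition election :: "'v set \<Rightarrow> 'c set \<Rightarrow> nat \<Rightarrow> ('c set \<Rightarrow> nat) \<Rightarrow> bool" where
  "election V C S B \<longleftrightarrow> finite V \<and> finite C \<and> 1 \<le> S \<and> S \<le> card C
     \<and> (\<forall>y. \<not> y \<subseteq> C \<longrightarrow> B y = 0)
     \<and> (\<Sum>y\<in>Pow C. B y) \<le> card V"

text \<open>The family of admissible support distributions F : 2^C \<times> A \<rightarrow> R.
  Only the values on Pow C \<times> A are meaningful.\<close>
definition fam :: "'c set \<Rightarrow> ('c set \<Rightarrow> nat) \<Rightarrow> 'c set \<Rightarrow> ('c set \<Rightarrow> 'c \<Rightarrow> real) set" where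
  "fam C B A = {F. (\<forall>y\<in>Pow C. \<forall>c\<in>A. F y c \<ge> 0)
                 \<and> (\<forall>y\<in>Pow C. \<forall>c\<in>A. c \<notin> y \<longrightarrow> F y c = 0)
                 \<and> (\<forall>y\<in>Pow C. y \<inter> A \<noteq> {} \<longrightarrow> (\<Sum>c\<in>A \<inter> y. F y c) = real (B y))}"

definition Supp :: "'c set \<Rightarrow> ('c set \<Rightarrow> 'c \<Rightarrow> real) \<Rightarrow> 'c \<Rightarrow> real" where
  "Supp C F c = (\<Sum>y\<in>Pow C. F y c)"

definition maxMin :: "'c set \<Rightarrow> ('c set \<Rightarrow> nat) \<Rightarrow> 'c set \<Rightarrow> real" where
  "maxMin C B A = (SUP F\<in>fam C B A. Min (Supp C F ` A))"

definition fam_opt :: "'c set \<Rightarrow> ('c set \<Rightarrow> nat) \<Rightarrow> 'c set \<Rightarrow> ('c set \<Rightarrow> 'c \<Rightarrow> real) set" where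
  "fam_opt C B A = {F\<in>fam C B A. \<forall>c\<in>A. Supp C F c \<ge> maxMin C B A}"

text \<open>A run of ODH: the list ws of the S candidates in the order they were elected.\<close>
definition odh_run :: "'c set \<Rightarrow> nat \<Rightarrow> ('c set \<Rightarrow> nat) \<Rightarrow> 'c list \<Rightarrow> bool" where
  "odh_run C S B ws \<longleftrightarrow> length ws = S \<and> distinct ws \<and> set ws \<subseteq> C \<and>
     (\<forall>i<S. \<exists>Fs :: 'c \<Rightarrow> ('c set \<Rightarrow> 'c \<Rightarrow> real).
        (\<forall>c\<in>C - set (take i ws). Fs c \<in> fam_opt C B (set (take i ws) \<union> {c}))
        \<and> (\<forall>c\<in>C - set (take i ws). Supp C (Fs c) c \<le> Supp C (Fs (ws ! i)) (ws ! i)))"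

end

theory Submission
  imports Defs
begin


definition NN :: "'c set \<Rightarrow> ('c set \<Rightarrow> nat) \<Rightarrow> 'c set \<Rightarrow> real" where
  "NN C B Y = (\<Sum>y\<in>{y\<in>Pow C. y \<inter> Y \<noteq> {}}. real (B y))"

lemma fam_nonneg: "F \<in> fam C B A \<Longrightarrow> y \<in> Pow C \<Longrightarrow> x \<in> A \<Longrightarrow> F y x \<ge> 0"
  unfolding fam_def by auto
lemma fam_zero: "F \<in> fam C B A \<Longrightarrow> y \<in> Pow C \<Longrightarrow> x \<in> A \<Longrightarrow> x \<notin> y \<Longrightarrow> F y x = 0"
  unfolding fam_def by auto
lemma fam_sum: "F \<in> fam C B A \<Longrightarrow> y \<in> Pow C \<Longrightarrow> y \<inter> A \<noteq> {} \<Longrightarrow> (\<Sum>c\<in>A\<inter>y. F y c) = real (B y)"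
  unfolding fam_def by auto

lemma sum_Y_le:
  assumes F: "F \<in> fam C B A" and fin: "finite C" and YA: "Y \<subseteq> A" and finA: "finite A"
  shows "(\<Sum>x\<in>Y. Supp C F x) \<le> NN C B Y"
proof -
  have finY: "finite Y" using YA finA finite_subset by blast
  have "(\<Sum>x\<in>Y. Supp C F x) = (\<Sum>y\<in>Pow C. \<Sum>x\<in>Y. F y x)"
    unfolding Supp_def by (rule sum.swap)
  also have "\<dots> \<le> (\<Sum>y\<in>Pow C. if y \<inter> Y \<noteq> {} then real (B y) else 0)"
  proof (rule sum_mono)
    fix y assume y: "y \<in> Pow C"
    show "(\<Sum>x\<in>Y. F y x) \<le> (if y \<inter> Y \<noteq> {} then real (B y) else 0)"
    proof (cases "y \<inter> Y = {}")
      case True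
      then have "\<forall>x\<in>Y. F y x = 0" using fam_zero[OF F y] YA by blast
      then show ?thesis using True by simp
    next
      case False
      have "(\<Sum>x\<in>Y. F y x) = (\<Sum>x\<in>Y\<inter>y. F y x)"
        using fam_zero[OF F y] YA finY by (intro sum.mono_neutral_right) auto
      also have "\<dots> \<le> (\<Sum>x\<in>A\<inter>y. F y x)"
        using fam_nonneg[OF F y] YA finA by (intro sum_mono2) auto
      also have "\<dots> = real (B y)" using fam_sum[OF F y] False YA by blast
      finally show ?thesis using False by simp
    qed
  qed
  also have "\<dots> = NN C B Y" unfolding NN_def using fin by (subst sum.inter_filter) auto
  finally show ?thesis .
qed

lemma easy_bound:
  assumes F: "F \<in> fam C B A" and fin: "finite C" and YA: "Y \<subseteq> A" and finA: "finite A"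
    and ge: "\<forall>x\<in>Y. Supp C F x \<ge> t"
  shows "t * card Y \<le> NN C B Y"
proof -
  have "real (card Y) * t \<le> (\<Sum>x\<in>Y. Supp C F x)" using ge by (intro sum_bounded_below) auto
  with sum_Y_le[OF F fin YA finA] show ?thesis by (simp add: mult.commute)
qed

lemma pin:
  assumes F: "F \<in> fam C B A" and fin: "finite C" and ZA: "Z \<subseteq> A" and finA: "finite A"
    and cZ: "c \<in> Z" and ge: "\<forall>x\<in>Z. Supp C F x \<ge> t" and le: "NN C B Z \<le> t * card Z"
  shows "Supp C F c \<le> t"
proof -
  have finZ: "finite Z" using ZA finA finite_subset by blast
  have "(\<Sum>x\<in>Z. Supp C F x) = Supp C F c + (\<Sum>x\<in>Z-{c}. Supp C F x)"
    using finZ cZ by (rule sum.remove)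
  moreover have "real (card (Z-{c})) * t \<le> (\<Sum>x\<in>Z-{c}. Supp C F x)"
    using ge by (intro sum_bounded_below) auto
  moreover have "card (Z - {c}) = card Z - 1" using finZ cZ by simp
  moreover have "card Z \<ge> 1" using finZ cZ by (metis One_nat_def Suc_leI card_gt_0_iff empty_iff)
  moreover note sum_Y_le[OF F fin ZA finA]
  ultimately have "Supp C F c + (real (card Z) - 1) * t \<le> t * card Z"
    using le by (simp add: of_nat_diff)
  then show ?thesis by (simp add: algebra_simps)
qed

lemma supp_le_total:
  assumes G: "G \<in> fam C B A" and fin: "finite C" and finA: "finite A" and x: "x \<in> A"
  shows "Supp C G x \<le> (\<Sum>y\<in>Pow C. real (B y))"
  unfolding Supp_def
proof (rule sum_mono)
  fix y assume y: "y \<in> Pow C"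
  show "G y x \<le> real (B y)"
  proof (cases "x \<in> y")
    case False then show ?thesis using fam_zero[OF G y x] by simp
  next
    case True
    have "G y x \<le> (\<Sum>c\<in>A\<inter>y. G y c)"
      using True x finA fam_nonneg[OF G y] by (intro member_le_sum) auto
    also have "\<dots> = real (B y)" using fam_sum[OF G y] True x by blast
    finally show ?thesis .
  qed
qed

lemma opt_props:
  assumes F: "F \<in> fam_opt C B A" and fin: "finite C" and AC: "A \<subseteq> C" and Ane: "A \<noteq> {}"
  shows "F \<in> fam C B A" "\<forall>x\<in>A. Supp C F x \<ge> maxMin C B A"
    "\<forall>G\<in>fam C B A. \<not> (\<forall>x\<in>A. Supp C G x > maxMin C B A)"
proof -
  show "F \<in> fam C B A" "\<forall>x\<in>A. Supp C F x \<ge> maxMin C B A" using F unfolding fam_opt_def by auto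
  have finA: "finite A" using fin AC finite_subset by blast
  obtain x0 where x0: "x0 \<in> A" using Ane by blast
  have bdd: "bdd_above ((\<lambda>G. Min (Supp C G ` A)) ` fam C B A)"
  proof (rule bdd_aboveI2)
    fix G assume G: "G \<in> fam C B A"
    have "Min (Supp C G ` A) \<le> Supp C G x0" using finA x0 by simp
    also have "\<dots> \<le> (\<Sum>y\<in>Pow C. real (B y))" using supp_le_total[OF G fin finA x0] .
    finally show "Min (Supp C G ` A) \<le> (\<Sum>y\<in>Pow C. real (B y))" .
  qed
  show "\<forall>G\<in>fam C B A. \<not> (\<forall>x\<in>A. Supp C G x > maxMin C B A)"
  proof (intro ballI notI)
    fix G assume G: "G \<in> fam C B A" and all: "\<forall>x\<in>A. Supp C G x > maxMin C B A"
    have "Min (Supp C G ` A) \<le> maxMin C B A"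
      unfolding maxMin_def using G bdd by (rule cSUP_upper)
    moreover have "maxMin C B A < Min (Supp C G ` A)" using finA Ane all by simp
    ultimately show False by simp
  qed
qed



definition goodD :: "'c set \<Rightarrow> 'c set \<Rightarrow> ('c set \<Rightarrow> 'c \<Rightarrow> real) \<Rightarrow> ('c set \<Rightarrow> 'c \<Rightarrow> real) \<Rightarrow> bool" where
  "goodD C A F D \<longleftrightarrow> (\<forall>y\<in>Pow C. (\<Sum>x\<in>A\<inter>y. D y x) = 0) \<and> (\<forall>y\<in>Pow C. \<forall>x\<in>A. x\<notin>y \<longrightarrow> D y x = 0)
      \<and> (\<forall>y\<in>Pow C. \<forall>x\<in>A. D y x < 0 \<longrightarrow> F y x > 0)"

lemma push:
  assumes F: "F \<in> fam C B A" and fin: "finite C" and AC: "A \<subseteq> C"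
    and r: "(d,l) \<in> {(d,x). d\<in>A \<and> x\<in>A \<and> (\<exists>y\<in>Pow C. F y d > 0 \<and> x\<in>y)}\<^sup>*" and l: "l \<in> A"
  shows "\<exists>D. goodD C A F D \<and> (\<forall>x\<in>A. (\<Sum>y\<in>Pow C. D y x) = (if x=l then 1 else 0) - (if x=d then 1 else 0))"
  using r
proof (induction rule: converse_rtrancl_induct)
  case base
  show ?case by (rule exI[of _ "\<lambda>_ _. 0"]) (simp add: goodD_def)
next
  case (step d x)
  obtain D where D: "goodD C A F D" and DS: "\<forall>z\<in>A. (\<Sum>y\<in>Pow C. D y z) = (if z=l then 1 else 0) - (if z=x then 1 else 0)"
    using step.IH by blast
  from step.hyps(1) obtain y0 where y0: "y0 \<in> Pow C" "F y0 d > 0" "x \<in> y0" and dA: "d \<in> A" and xA: "x \<in> A"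
    by blast
  have dy0: "d \<in> y0" using fam_zero[OF F y0(1) dA] y0(2) by force
  have finA: "finite A" using fin AC finite_subset by blast
  define D' where "D' = (\<lambda>y z. D y z + (if y = y0 \<and> z = x then 1 else 0) - (if y = y0 \<and> z = d then 1 else 0))"
  have "goodD C A F D'"
    unfolding goodD_def
  proof (intro conjI ballI impI)
    fix y assume y: "y \<in> Pow C"
    show "(\<Sum>z\<in>A\<inter>y. D' y z) = 0"
    proof (cases "y = y0")
      case True
      have "(\<Sum>z\<in>A\<inter>y. D' y z) = (\<Sum>z\<in>A\<inter>y. D y z) + (\<Sum>z\<in>A\<inter>y. (if z = x then 1 else 0)) - (\<Sum>z\<in>A\<inter>y. (if z = d then 1 else 0))"
        unfolding D'_def using True by (simp add: sum.distrib sum_subtractf)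
      also have "\<dots> = 0" using D y True xA dA y0(3) dy0 finA unfolding goodD_def by simp
      finally show ?thesis .
    next
      case False
      then show ?thesis using D y unfolding goodD_def D'_def by simp
    qed
  next
    fix y z assume y: "y \<in> Pow C" and z: "z \<in> A" and zy: "z \<notin> y"
    show "D' y z = 0" using D y z zy y0(3) dy0 unfolding goodD_def D'_def by auto
  next
    fix y z assume y: "y \<in> Pow C" and z: "z \<in> A" and neg: "D' y z < 0"
    show "F y z > 0"
    proof (cases "y = y0 \<and> z = d")
      case True then show ?thesis using y0 by simp
    next
      case False
      then have "D y z < 0" using neg unfolding D'_def by (auto split: if_splits)
      then show ?thesis using D y z unfolding goodD_def by blast
    qed
  qed
  moreover have "\<forall>z\<in>A. (\<Sum>y\<in>Pow C. D' y z) = (if z=l then 1 else 0) - (if z=d then 1 else 0)"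
  proof
    fix z assume z: "z \<in> A"
    have "(\<Sum>y\<in>Pow C. D' y z) = (\<Sum>y\<in>Pow C. D y z) + (\<Sum>y\<in>Pow C. (if y = y0 then (if z = x then 1 else 0) else 0))
       - (\<Sum>y\<in>Pow C. (if y = y0 then (if z = d then 1 else 0) else 0))"
    proof -
      have "\<And>y. D' y z = D y z + (if y = y0 then (if z = x then 1 else 0) else 0) - (if y = y0 then (if z = d then 1 else 0) else 0)"
        unfolding D'_def by simp
      then show ?thesis by (simp add: sum.distrib sum_subtractf)
    qed
    also have "\<dots> = (if z=l then 1 else 0) - (if z=d then 1 else 0)"
      using DS z y0(1) fin by (cases "z = x"; cases "z = d"; simp)
    finally show "(\<Sum>y\<in>Pow C. D' y z) = (if z=l then 1 else 0) - (if z=d then 1 else 0)" .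
  qed
  ultimately show ?case by blast
qed



lemma tight_exists:
  assumes F: "F \<in> fam C B A" and fin: "finite C" and AC: "A \<subseteq> C" and Ane: "A \<noteq> {}"
    and ge: "\<forall>x\<in>A. Supp C F x \<ge> m"
    and nob: "\<forall>G\<in>fam C B A. \<not> (\<forall>x\<in>A. Supp C G x > m)"
  shows "\<exists>Z. Z \<noteq> {} \<and> Z \<subseteq> A \<and> NN C B Z \<le> m * card Z"
proof -
  define R where "R = {(d,x). d\<in>A \<and> x\<in>A \<and> (\<exists>y\<in>Pow C. F y d > 0 \<and> x\<in>y)}"
  define L where "L = {x\<in>A. Supp C F x = m}"
  define H where "H = {x\<in>A. Supp C F x > m}"
  have finA: "finite A" using fin AC finite_subset by blast
  have AL: "A = L \<union> H" using ge unfolding L_def H_def by force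
  show ?thesis
  proof (cases "\<exists>l\<in>L. \<forall>d\<in>H. (d,l) \<notin> R\<^sup>*")
    case True
    then obtain l where l: "l \<in> L" and nl: "\<forall>d\<in>H. (d,l) \<notin> R\<^sup>*" by blast
    define Z where "Z = {d\<in>A. (d,l) \<in> R\<^sup>*}"
    have lZ: "l \<in> Z" using l unfolding Z_def L_def by auto
    have ZA: "Z \<subseteq> A" unfolding Z_def by auto
    have finZ: "finite Z" using ZA finA finite_subset by blast
    have Zm: "\<forall>x\<in>Z. Supp C F x = m" using nl ge unfolding Z_def H_def by force
    have clos: "x \<in> Z" if y: "y \<in> Pow C" and x: "x \<in> A" and pos: "F y x > 0" and z: "z \<in> y \<inter> Z" for y x z
    proof -
      have "(x,z) \<in> R" using y x pos z ZA unfolding R_def by blast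
      moreover have "(z,l) \<in> R\<^sup>*" using z unfolding Z_def by blast
      ultimately show ?thesis using x unfolding Z_def by auto
    qed
    have "NN C B Z = (\<Sum>y\<in>Pow C. if y \<inter> Z \<noteq> {} then real (B y) else 0)"
      unfolding NN_def using fin by (subst sum.inter_filter) auto
    also have "\<dots> \<le> (\<Sum>y\<in>Pow C. \<Sum>x\<in>Z. F y x)"
    proof (rule sum_mono)
      fix y assume y: "y \<in> Pow C"
      show "(if y \<inter> Z \<noteq> {} then real (B y) else 0) \<le> (\<Sum>x\<in>Z. F y x)"
      proof (cases "y \<inter> Z = {}")
        case True
        then show ?thesis using fam_nonneg[OF F y] ZA by (simp add: sum_nonneg subset_iff)
      next
        case False
        then obtain z where z: "z \<in> y \<inter> Z" by blast
        have "real (B y) = (\<Sum>x\<in>A\<inter>y. F y x)" using fam_sum[OF F y] False ZA by (metis inf.absorb_iff2 inf_left_commute inf_bot_right inf_commute)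
        also have "\<dots> = (\<Sum>x\<in>Z\<inter>y. F y x)"
        proof (rule sum.mono_neutral_right)
          show "finite (A \<inter> y)" using finA by simp
          show "Z \<inter> y \<subseteq> A \<inter> y" using ZA by blast
          show "\<forall>i\<in>A \<inter> y - Z \<inter> y. F y i = 0"
          proof
            fix i assume i: "i \<in> A \<inter> y - Z \<inter> y"
            have "\<not> F y i > 0" using clos[OF y _ _ z] i by blast
            then show "F y i = 0" using fam_nonneg[OF F y] i by force
          qed
        qed
        also have "\<dots> \<le> (\<Sum>x\<in>Z. F y x)"
          using finZ fam_nonneg[OF F y] ZA by (intro sum_mono2) auto
        finally show ?thesis using False by simp
      qed
    qed
    also have "\<dots> = (\<Sum>x\<in>Z. Supp C F x)" unfolding Supp_def by (rule sum.swap)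
    also have "\<dots> = m * card Z" using Zm by (simp add: mult.commute)
    finally show ?thesis using lZ ZA by blast
  next
    case False
    then have "\<forall>l\<in>L. \<exists>d. d \<in> H \<and> (d,l) \<in> R\<^sup>*" by blast
    then obtain dl where dl: "\<forall>l\<in>L. dl l \<in> H \<and> (dl l, l) \<in> R\<^sup>*" by metis
    have "\<forall>l\<in>L. \<exists>D. goodD C A F D \<and> (\<forall>x\<in>A. (\<Sum>y\<in>Pow C. D y x) = (if x=l then 1 else 0) - (if x=dl l then 1 else 0))"
    proof
      fix l assume l: "l \<in> L"
      show "\<exists>D. goodD C A F D \<and> (\<forall>x\<in>A. (\<Sum>y\<in>Pow C. D y x) = (if x=l then 1 else 0) - (if x=dl l then 1 else 0))"
        using push[OF F fin AC, of "dl l" l] dl l unfolding R_def L_def by blast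
    qed
    then obtain Dl where Dl: "\<forall>l\<in>L. goodD C A F (Dl l) \<and> (\<forall>x\<in>A. (\<Sum>y\<in>Pow C. Dl l y x) = (if x=l then 1 else 0) - (if x=dl l then 1 else 0))"
      by metis
    have finL: "finite L" using finA unfolding L_def by simp
    define D where "D = (\<lambda>y x. \<Sum>l\<in>L. Dl l y x)"
    have Dsum: "\<forall>y\<in>Pow C. (\<Sum>x\<in>A\<inter>y. D y x) = 0"
    proof
      fix y assume y: "y \<in> Pow C"
      have "(\<Sum>x\<in>A\<inter>y. D y x) = (\<Sum>l\<in>L. \<Sum>x\<in>A\<inter>y. Dl l y x)" unfolding D_def by (rule sum.swap)
      also have "\<dots> = 0" using Dl y unfolding goodD_def by simp
      finally show "(\<Sum>x\<in>A\<inter>y. D y x) = 0" .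
    qed
    have Dzero: "\<forall>y\<in>Pow C. \<forall>x\<in>A. x\<notin>y \<longrightarrow> D y x = 0"
      using Dl unfolding goodD_def D_def by simp
    have Dneg: "\<forall>y\<in>Pow C. \<forall>x\<in>A. D y x < 0 \<longrightarrow> F y x > 0"
    proof (intro ballI impI)
      fix y x assume y: "y \<in> Pow C" and x: "x \<in> A" and neg: "D y x < 0"
      have "\<exists>l\<in>L. Dl l y x < 0"
      proof (rule ccontr)
        assume "\<not> (\<exists>l\<in>L. Dl l y x < 0)"
        then have "D y x \<ge> 0" unfolding D_def by (intro sum_nonneg) auto
        then show False using neg by simp
      qed
      then show "F y x > 0" using Dl y x unfolding goodD_def by blast
    qed
    have DS: "(\<Sum>y\<in>Pow C. D y x) = (\<Sum>l\<in>L. (if x=l then 1 else 0) - (if x=dl l then 1 else 0))" if x: "x \<in> A" for x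
    proof -
      have "(\<Sum>y\<in>Pow C. D y x) = (\<Sum>l\<in>L. \<Sum>y\<in>Pow C. Dl l y x)" unfolding D_def by (rule sum.swap)
      also have "\<dots> = (\<Sum>l\<in>L. (if x=l then 1 else 0) - (if x=dl l then 1 else 0))"
        using Dl x by (intro sum.cong) auto
      finally show ?thesis .
    qed
    have DSL: "(\<Sum>y\<in>Pow C. D y x) = 1" if x: "x \<in> L" for x
    proof -
      have "x \<notin> H" using x unfolding L_def H_def by auto
      then have "\<forall>l\<in>L. dl l \<noteq> x" using dl by metis
      then have "(\<Sum>l\<in>L. (if x=l then 1 else 0) - (if x=dl l then 1 else 0)) = (\<Sum>l\<in>L. (if x=l then 1 else 0::real))"
        by (intro sum.cong) auto
      also have "\<dots> = 1" using x finL by simp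
      finally show ?thesis using DS[of x] x unfolding L_def by simp
    qed
    have DSH: "(\<Sum>y\<in>Pow C. D y x) \<ge> - real (card L)" if x: "x \<in> A" for x
    proof -
      have "(\<Sum>l\<in>L. (if x=l then 1 else 0) - (if x=dl l then 1 else 0)) \<ge> (\<Sum>l\<in>L. (-1::real))"
        by (intro sum_mono) auto
      then show ?thesis using DS[OF x] by simp
    qed
    define Q where "Q = {F y x / (- D y x) | y x. y \<in> Pow C \<and> x \<in> A \<and> D y x < 0}
        \<union> {(Supp C F x - m) / (real (card L) + 1) | x. x \<in> H}"
    have finQ: "finite Q"
    proof -
      have "{F y x / (- D y x) | y x. y \<in> Pow C \<and> x \<in> A \<and> D y x < 0} \<subseteq> (\<lambda>(y,x). F y x / (- D y x)) ` (Pow C \<times> A)"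
        by auto
      moreover have "{(Supp C F x - m) / (real (card L) + 1) | x. x \<in> H} = (\<lambda>x. (Supp C F x - m) / (real (card L) + 1)) ` H"
        by auto
      moreover have "finite H" using finA unfolding H_def by simp
      moreover have "finite ((\<lambda>(y,x). F y x / (- D y x)) ` (Pow C \<times> A))" using fin finA by simp
      ultimately show ?thesis unfolding Q_def by (metis (no_types, lifting) finite_Un finite_imageI finite_subset)
    qed
    have Qpos: "\<forall>q\<in>Q. q > 0"
      unfolding Q_def H_def using Dneg by (auto intro!: divide_pos_pos simp: divide_pos_neg)
    define e where "e = Min (insert 1 Q)"
    have epos: "e > 0" unfolding e_def using finQ Qpos by simp
    have eQ: "e \<le> q" if "q \<in> Q" for q unfolding e_def using finQ that by simp
    define G where "G = (\<lambda>y x. F y x + e * D y x)"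
    have G: "G \<in> fam C B A"
      unfolding fam_def
    proof (intro CollectI conjI ballI impI)
      fix y x assume y: "y \<in> Pow C" and x: "x \<in> A"
      show "0 \<le> G y x"
      proof (cases "D y x < 0")
        case True
        then have "e \<le> F y x / (- D y x)" using y x by (intro eQ) (auto simp: Q_def)
        moreover have "- D y x > 0" using True by simp
        ultimately have "e * (- D y x) \<le> F y x" by (simp only: pos_le_divide_eq)
        then show ?thesis unfolding G_def by simp
      next
        case False
        then show ?thesis unfolding G_def using fam_nonneg[OF F y x] epos by simp
      qed
    next
      fix y x assume y: "y \<in> Pow C" and x: "x \<in> A" and xy: "x \<notin> y"
      show "G y x = 0" unfolding G_def using fam_zero[OF F y x xy] Dzero y x xy by simp
    next
      fix y assume y: "y \<in> Pow C" and ne: "y \<inter> A \<noteq> {}"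
      have "(\<Sum>c\<in>A \<inter> y. G y c) = (\<Sum>c\<in>A \<inter> y. F y c) + e * (\<Sum>c\<in>A \<inter> y. D y c)"
        unfolding G_def by (simp add: sum.distrib sum_distrib_left)
      then show "(\<Sum>c\<in>A \<inter> y. G y c) = real (B y)" using fam_sum[OF F y ne] Dsum y by simp
    qed
    have SG: "Supp C G x = Supp C F x + e * (\<Sum>y\<in>Pow C. D y x)" for x
      unfolding Supp_def G_def by (simp add: sum.distrib sum_distrib_left)
    have "\<forall>x\<in>A. Supp C G x > m"
    proof
      fix x assume x: "x \<in> A"
      show "Supp C G x > m"
      proof (cases "x \<in> L")
        case True
        then show ?thesis using SG[of x] DSL[OF True] epos unfolding L_def by simp
      next
        case False
        then have xH: "x \<in> H" using AL x by blast
        then have "e \<le> (Supp C F x - m) / (real (card L) + 1)" by (intro eQ) (auto simp: Q_def)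
        then have "e * (real (card L) + 1) \<le> Supp C F x - m" by (simp add: le_divide_eq add_pos_nonneg)
        moreover have "e * (\<Sum>y\<in>Pow C. D y x) \<ge> e * (- real (card L))"
          using DSH[OF x] epos by (intro mult_left_mono) auto
        ultimately show ?thesis using SG[of x] epos by (simp add: algebra_simps)
      qed
    qed
    then show ?thesis using nob G by blast
  qed
qed



lemma pin_opt:
  assumes F: "F \<in> fam_opt C B A" and fin: "finite C" and AC: "A \<subseteq> C"
    and ZA: "Z \<subseteq> A" and cZ: "c \<in> Z" and le: "NN C B Z \<le> maxMin C B A * card Z"
  shows "Supp C F c = maxMin C B A"
proof -
  have Ane: "A \<noteq> {}" using ZA cZ by blast
  note op = opt_props[OF F fin AC Ane]
  have finA: "finite A" using fin AC finite_subset by blast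
  have "Supp C F c \<le> maxMin C B A"
    using pin[OF op(1) fin ZA finA cZ _ le] op(2) ZA by blast
  moreover have "Supp C F c \<ge> maxMin C B A" using op(2) ZA cZ by blast
  ultimately show ?thesis by simp
qed

lemma mainP:
  fixes C :: "'c set" and ws :: "'c list"
  assumes el: "election V C S B" and run: "odh_run C S B ws"
  shows "i < S \<Longrightarrow> c \<in> C - set (take i ws) \<Longrightarrow>
    \<exists>Z. c \<in> Z \<and> Z \<subseteq> set (take i ws) \<union> {c} \<and> NN C B Z \<le> maxMin C B (set (take i ws) \<union> {c}) * card Z"
proof (induction i arbitrary: c rule: less_induct)
  case (less i)
  have fin: "finite C" using el unfolding election_def by simp
  have len: "length ws = S" and dist: "distinct ws" and wsC: "set ws \<subseteq> C"
    using run unfolding odh_run_def by auto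
  have steps: "\<forall>i<S. \<exists>Fs :: 'c \<Rightarrow> ('c set \<Rightarrow> 'c \<Rightarrow> real).
        (\<forall>c\<in>C - set (take i ws). Fs c \<in> fam_opt C B (set (take i ws) \<union> {c}))
        \<and> (\<forall>c\<in>C - set (take i ws). Supp C (Fs c) c \<le> Supp C (Fs (ws ! i)) (ws ! i))"
    using run unfolding odh_run_def by blast
  define A where "A = set (take i ws) \<union> {c}"
  have AC: "A \<subseteq> C" unfolding A_def using less.prems wsC set_take_subset by fastforce
  obtain Fs where Fs: "\<forall>c\<in>C - set (take i ws). Fs c \<in> fam_opt C B (set (take i ws) \<union> {c})"
    using steps less.prems(1) by blast
  have Fc: "Fs c \<in> fam_opt C B A" using Fs less.prems(2) unfolding A_def by blast
  have Ane: "A \<noteq> {}" unfolding A_def by simp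
  note op = opt_props[OF Fc fin AC Ane]
  obtain Y where Y: "Y \<noteq> {}" "Y \<subseteq> A" "NN C B Y \<le> maxMin C B A * card Y"
    using tight_exists[OF op(1) fin AC Ane op(2) op(3)] by blast
  show ?case
  proof (cases "c \<in> Y")
    case True then show ?thesis using Y unfolding A_def by blast
  next
    case False
    then have YE: "Y \<subseteq> set (take i ws)" using Y(2) unfolding A_def by blast
    have iS: "i \<le> length ws" using less.prems len by simp
    define J where "J = {k. k < i \<and> ws ! k \<in> Y}"
    have finJ: "finite J" unfolding J_def by simp
    have Jne: "J \<noteq> {}"
    proof -
      obtain y where y: "y \<in> Y" using Y(1) by blast
      then have "y \<in> set (take i ws)" using YE by blast
      then obtain k where "k < length (take i ws)" "take i ws ! k = y" by (metis in_set_conv_nth)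
      then have "k \<in> J" using y iS unfolding J_def by auto
      then show ?thesis by blast
    qed
    define j where "j = Max J"
    have jJ: "j \<in> J" unfolding j_def using finJ Jne by simp
    have ji: "j < i" and wY: "ws ! j \<in> Y" using jJ unfolding J_def by auto
    define w where "w = ws ! j"
    have jlen: "j < length ws" using ji iS by simp
    have takeSuc: "set (take (Suc j) ws) = set (take j ws) \<union> {w}"
      unfolding w_def using jlen by (simp add: take_Suc_conv_app_nth)
    have YEj: "Y \<subseteq> set (take j ws) \<union> {w}"
    proof
      fix y assume y: "y \<in> Y"
      then have "y \<in> set (take i ws)" using YE by blast
      then obtain k where k: "k < length (take i ws)" "take i ws ! k = y" by (metis in_set_conv_nth)
      then have kJ: "k \<in> J" using y iS unfolding J_def by auto
      then have "k \<le> j" unfolding j_def using finJ by simp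
      then have "k < length (take (Suc j) ws)" using jlen by simp
      moreover have "take (Suc j) ws ! k = y" using k \<open>k \<le> j\<close> by simp
      ultimately have "y \<in> set (take (Suc j) ws)" by (metis nth_mem)
      then show "y \<in> set (take j ws) \<union> {w}" using takeSuc by simp
    qed
    have wnot: "w \<notin> set (take j ws)"
    proof
      assume "w \<in> set (take j ws)"
      then obtain k where k: "k < length (take j ws)" "take j ws ! k = w" by (metis in_set_conv_nth)
      then have "ws ! k = ws ! j" "k < j" unfolding w_def by auto
      then show False using dist jlen nth_eq_iff_index_eq by fastforce
    qed
    have wC: "w \<in> C" unfolding w_def using jlen wsC nth_mem by blast
    have Ej_sub: "set (take j ws) \<subseteq> set (take i ws)" using ji by (simp add: set_take_subset_set_take)
    have cEj: "c \<in> C - set (take j ws)" using less.prems(2) Ej_sub by blast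
    have wEj: "w \<in> C - set (take j ws)" using wC wnot by blast
    have jS: "j < S" using ji less.prems by simp
    obtain Gs where Gs: "\<forall>c\<in>C - set (take j ws). Gs c \<in> fam_opt C B (set (take j ws) \<union> {c})"
      and Gmax: "\<forall>c\<in>C - set (take j ws). Supp C (Gs c) c \<le> Supp C (Gs (ws ! j)) (ws ! j)"
      using steps jS by blast
    define Aw where "Aw = set (take j ws) \<union> {w}"
    define Ac where "Ac = set (take j ws) \<union> {c}"
    have AwC: "Aw \<subseteq> C" unfolding Aw_def using wC wsC set_take_subset by fastforce
    have AcC: "Ac \<subseteq> C" unfolding Ac_def using cEj wsC set_take_subset by fastforce
    have Gw: "Gs w \<in> fam_opt C B Aw" using Gs wEj unfolding Aw_def by blast
    have Gc: "Gs c \<in> fam_opt C B Ac" using Gs cEj unfolding Ac_def by blast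
    obtain Zw where Zw: "w \<in> Zw" "Zw \<subseteq> Aw" "NN C B Zw \<le> maxMin C B Aw * card Zw"
      using less.IH[OF ji jS wEj] unfolding Aw_def by blast
    have sw: "Supp C (Gs w) w = maxMin C B Aw" using pin_opt[OF Gw fin AwC Zw(2) Zw(1) Zw(3)] .
    have Awne: "Aw \<noteq> {}" unfolding Aw_def by simp
    have Acne: "Ac \<noteq> {}" unfolding Ac_def by simp
    note opw = opt_props[OF Gw fin AwC Awne]
    note opc = opt_props[OF Gc fin AcC Acne]
    have finAw: "finite Aw" using fin AwC finite_subset by blast
    have YAw: "Y \<subseteq> Aw" using YEj unfolding Aw_def .
    have "maxMin C B Aw * card Y \<le> NN C B Y"
      using easy_bound[OF opw(1) fin YAw finAw] opw(2) YAw by blast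
    with Y(3) have "maxMin C B Aw * card Y \<le> maxMin C B A * card Y" by linarith
    moreover have "card Y > 0" using Y(1) Y(2) AC fin by (meson card_gt_0_iff finite_subset)
    ultimately have mw: "maxMin C B Aw \<le> maxMin C B A" by simp
    have "maxMin C B Ac \<le> Supp C (Gs c) c" using opc(2) unfolding Ac_def by blast
    also have "\<dots> \<le> Supp C (Gs w) w" using Gmax cEj unfolding w_def by blast
    finally have mc: "maxMin C B Ac \<le> maxMin C B A" using sw mw by simp
    obtain Zc where Zc: "c \<in> Zc" "Zc \<subseteq> Ac" "NN C B Zc \<le> maxMin C B Ac * card Zc"
      using less.IH[OF ji jS cEj] unfolding Ac_def by blast
    have "NN C B Zc \<le> maxMin C B A * card Zc"
      using Zc(3) mc by (meson order_trans mult_right_mono of_nat_0_le_iff)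
    moreover have "Zc \<subseteq> set (take i ws) \<union> {c}" using Zc(2) Ej_sub unfolding Ac_def by blast
    ultimately show ?thesis using Zc(1) unfolding A_def by blast
  qed
qed

theorem theorem2:
  fixes V :: "'v set" and C :: "'c set" and S :: nat and B :: "'c set \<Rightarrow> nat"
    and ws :: "'c list"
  assumes "election V C S B"
    and "odh_run C S B ws"
    and "i < S"
    and "c \<in> C - set (take i ws)"
    and "F \<in> fam_opt C B (set (take i ws) \<union> {c})"
  shows "Supp C F c = maxMin C B (set (take i ws) \<union> {c})"
proof -
  have fin: "finite C" using assms(1) unfolding election_def by simp
  have wsC: "set ws \<subseteq> C" using assms(2) unfolding odh_run_def by auto
  have AC: "set (take i ws) \<union> {c} \<subseteq> C" using assms(4) wsC set_take_subset by fastforce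
  obtain Z where Z: "c \<in> Z" "Z \<subseteq> set (take i ws) \<union> {c}"
      "NN C B Z \<le> maxMin C B (set (take i ws) \<union> {c}) * card Z"
    using mainP[OF assms(1,2,3,4)] by blast
  show ?thesis using pin_opt[OF assms(5) fin AC Z(2) Z(1) Z(3)] .
qed


end
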